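(* Let $G_1=(V_1,E_1)$ be a graph of maximum degree $\Delta_1$ and let $G_2=(V_2,E_2)$ be a $\delta_2$-regular graph. Let $S_1\subseteq V_1$. For every integer $k\in\{\delta_2-\Delta_1,\dots,\Delta_1+\delta_2\}$, $S_1\times V_2$ is a $k$-daf set in $G_1\times G_2$ if and only if $S_1$ is a $(k-\delta_2)$-daf set in $G_1$.
   Context: All graphs are finite and simple (with non-empty vertex sets). For a graph $G=(V,E)$, a set $S\subseteq V$ and $v\in V$, let $\delta_S(v)=|\{u\in S: uv\in E\}|$ and $\overline{S}=V\setminus S$. For an integer $k$, a non-empty set $S\subseteq V$ is a defensive $k$-alliance if $\delta_S(v)\ge \delta_{\overline S}(v)+k$ for every $v\in S$. A set $X\subseteq V$ is a defensive $k$-alliance free set ($k$-daf set) if no defensive $k$-alliance $S$ satisfies $S\subseteq X$. The Cartesian product $G_1\times G_2$ of $G_1=(V_1,E_1)$, $G_2=(V_2,E_2)$ has vertex set $V_1\times V_2$, with $(a,b)$ adjacent to $(c,d)$ iff either $a=c$ and $bd\in E_2$, or $b=d$ and $ac\in E_1$. *)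

theory Defs
  imports Main
begin

definition graph :: "'a set \<Rightarrow> ('a \<Rightarrow> 'a \<Rightarrow> bool) \<Rightarrow> bool" where
  "graph V E \<longleftrightarrow> finite V \<and> V \<noteq> {} \<and>
     (\<forall>u v. E u v \<longrightarrow> u \<in> V \<and> v \<in> V) \<and>
     (\<forall>u v. E u v \<longrightarrow> E v u) \<and> (\<forall>v. \<not> E v v)"

definition degree :: "'a set \<Rightarrow> ('a \<Rightarrow> 'a \<Rightarrow> bool) \<Rightarrow> 'a \<Rightarrow> nat" where
  "degree V E v = card {u \<in> V. E v u}"

definition max_degree :: "'a set \<Rightarrow> ('a \<Rightarrow> 'a \<Rightarrow> bool) \<Rightarrow> nat" where
  "max_degree V E = Max (degree V E ` V)"

definition regular :: "'a set \<Rightarrow> ('a \<Rightarrow> 'a \<Rightarrow> bool) \<Rightarrow> nat \<Rightarrow> bool" where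
  "regular V E d \<longleftrightarrow> (\<forall>v\<in>V. degree V E v = d)"

definition nbr_count :: "('a \<Rightarrow> 'a \<Rightarrow> bool) \<Rightarrow> 'a set \<Rightarrow> 'a \<Rightarrow> nat" where
  "nbr_count E S v = card {u \<in> S. E u v}"

definition defensive_alliance ::
  "'a set \<Rightarrow> ('a \<Rightarrow> 'a \<Rightarrow> bool) \<Rightarrow> int \<Rightarrow> 'a set \<Rightarrow> bool" where
  "defensive_alliance V E k S \<longleftrightarrow> S \<noteq> {} \<and> S \<subseteq> V \<and>
     (\<forall>v\<in>S. int (nbr_count E S v) \<ge> int (nbr_count E (V - S) v) + k)"

definition daf_set :: "'a set \<Rightarrow> ('a \<Rightarrow> 'a \<Rightarrow> bool) \<Rightarrow> int \<Rightarrow> 'a set \<Rightarrow> bool" where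
  "daf_set V E k X \<longleftrightarrow> X \<subseteq> V \<and>
     (\<forall>S. defensive_alliance V E k S \<longrightarrow> \<not> S \<subseteq> X)"

definition cart_edge ::
  "('a \<Rightarrow> 'a \<Rightarrow> bool) \<Rightarrow> ('b \<Rightarrow> 'b \<Rightarrow> bool) \<Rightarrow> 'a \<times> 'b \<Rightarrow> 'a \<times> 'b \<Rightarrow> bool" where
  "cart_edge E1 E2 x y \<longleftrightarrow>
     (fst x = fst y \<and> E2 (snd x) (snd y)) \<or> (snd x = snd y \<and> E1 (fst x) (fst y))"

end

theory Submission
  imports Defs
begin

lemma deg_sym:
  assumes "graph V E" "regular V E d" "b \<in> V"
  shows "card {b'\<in>V. E b' b} = d"
proof -
  have "{b'\<in>V. E b' b} = {u \<in> V. E b u}" using assms(1) unfolding graph_def by blast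
  thus ?thesis using assms(2,3) unfolding regular_def degree_def by simp
qed

lemma dir1:
  assumes g1: "graph V1 E1" and g2: "graph V2 E2" and r: "regular V2 E2 d"
    and A: "defensive_alliance V1 E1 (k - int d) A"
  shows "defensive_alliance (V1 \<times> V2) (cart_edge E1 E2) k (A \<times> V2)"
proof -
  have AV: "A \<subseteq> V1" "A \<noteq> {}" using A unfolding defensive_alliance_def by auto
  have V2ne: "V2 \<noteq> {}" and f2: "finite V2" and f1: "finite V1"
    using g1 g2 unfolding graph_def by auto
  have "int (nbr_count (cart_edge E1 E2) (A \<times> V2) v)
        \<ge> int (nbr_count (cart_edge E1 E2) (V1 \<times> V2 - A \<times> V2) v) + k" if v: "v \<in> A \<times> V2" for v
  proof -
    obtain a b where vab: "v = (a,b)" "a \<in> A" "b \<in> V2" using v by auto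
    let ?f = "\<lambda>a'. (a', b)"
    have h: "int (nbr_count E1 A a) \<ge> int (nbr_count E1 (V1 - A) a) + (k - int d)"
      using A vab unfolding defensive_alliance_def by auto
    define X where "X = {a} \<times> {b'\<in>V2. E2 b' b}"
    define Y where "Y = ?f ` {a'\<in>A. E1 a' a}"
    have sub: "X \<union> Y \<subseteq> {u \<in> A \<times> V2. cart_edge E1 E2 u v}"
      using vab AV g1 unfolding X_def Y_def cart_edge_def graph_def by auto
    have fin: "finite {u \<in> A \<times> V2. cart_edge E1 E2 u v}"
      using AV f1 f2 by (auto intro: finite_subset[of _ "V1 \<times> V2"])
    have disj: "X \<inter> Y = {}" using g1 unfolding X_def Y_def graph_def by auto
    have cX: "card X = d" unfolding X_def using deg_sym[OF g2 r vab(3)]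
      by (simp add: card_cartesian_product)
    have cY: "card Y = nbr_count E1 A a" unfolding Y_def nbr_count_def
      by (rule card_image) (auto simp: inj_on_def)
    have finXY: "finite X" "finite Y" using fin sub by (auto intro: finite_subset)
    have "card (X \<union> Y) = d + nbr_count E1 A a"
      using card_Un_disjoint[OF finXY disj] cX cY by simp
    hence L: "d + nbr_count E1 A a \<le> nbr_count (cart_edge E1 E2) (A \<times> V2) v"
      unfolding nbr_count_def using card_mono[OF fin sub] by simp
    have sub2: "{u \<in> V1 \<times> V2 - A \<times> V2. cart_edge E1 E2 u v} \<subseteq> ?f ` {a'\<in>V1 - A. E1 a' a}"
      using vab unfolding cart_edge_def by auto
    have "nbr_count (cart_edge E1 E2) (V1 \<times> V2 - A \<times> V2) v \<le> card (?f ` {a'\<in>V1 - A. E1 a' a})"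
      unfolding nbr_count_def using f1 by (intro card_mono[OF _ sub2]) auto
    also have "\<dots> = nbr_count E1 (V1 - A) a" unfolding nbr_count_def
      by (rule card_image) (auto simp: inj_on_def)
    finally show ?thesis using L h by linarith
  qed
  thus ?thesis using AV V2ne unfolding defensive_alliance_def by auto
qed

lemma dir2:
  assumes g1: "graph V1 E1" and g2: "graph V2 E2" and r: "regular V2 E2 d"
    and S: "defensive_alliance (V1 \<times> V2) (cart_edge E1 E2) k S"
  shows "defensive_alliance V1 E1 (k - int d) (fst ` S)"
proof -
  let ?P = "fst ` S"
  have SV: "S \<subseteq> V1 \<times> V2" "S \<noteq> {}" using S unfolding defensive_alliance_def by auto
  have f2: "finite V2" and f1: "finite V1"
    using g1 g2 unfolding graph_def by auto
  have "int (nbr_count E1 ?P a) \<ge> int (nbr_count E1 (V1 - ?P) a) + (k - int d)"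
    if a: "a \<in> ?P" for a
  proof -
    obtain b where ab: "(a,b) \<in> S" using a by force
    have bV: "b \<in> V2" using ab SV by auto
    define Sb where "Sb = {a'. (a',b) \<in> S}"
    let ?f = "\<lambda>a'. (a', b)"
    have h: "int (nbr_count (cart_edge E1 E2) S (a,b))
        \<ge> int (nbr_count (cart_edge E1 E2) (V1 \<times> V2 - S) (a,b)) + k"
      using S ab unfolding defensive_alliance_def by auto
    define X where "X = {u \<in> S. fst u = a \<and> E2 (snd u) b}"
    define Y where "Y = ?f ` {a'\<in>Sb. E1 a' a}"
    have sub: "{u \<in> S. cart_edge E1 E2 u (a,b)} \<subseteq> X \<union> Y"
      unfolding X_def Y_def Sb_def cart_edge_def by force
    have finS: "finite S" using SV f1 f2 by (auto intro: finite_subset)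
    have SbV: "Sb \<subseteq> V1" using SV unfolding Sb_def by auto
    have "X \<subseteq> (\<lambda>b'. (a,b')) ` {b'\<in>V2. E2 b' b}" using SV unfolding X_def by force
    hence cX: "card X \<le> d"
      using card_image_le[of "{b'\<in>V2. E2 b' b}" "\<lambda>b'. (a,b')"] deg_sym[OF g2 r bV] f2
      by (metis (no_types, lifting) card_mono finite_imageI finite_subset mem_Collect_eq subsetI order_trans)
    have cY: "card Y = card {a'\<in>Sb. E1 a' a}" unfolding Y_def
      by (rule card_image) (auto simp: inj_on_def)
    have finXY: "finite X" "finite Y" using finS SbV f1 unfolding X_def Y_def
      by (auto intro: finite_subset)
    have "nbr_count (cart_edge E1 E2) S (a,b) \<le> card (X \<union> Y)"
      unfolding nbr_count_def using finXY by (intro card_mono[OF _ sub]) auto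
    also have "\<dots> \<le> card X + card Y" by (rule card_Un_le)
    finally have L1: "nbr_count (cart_edge E1 E2) S (a,b) \<le> d + card {a'\<in>Sb. E1 a' a}"
      using cX cY by linarith
    have PV: "?P \<subseteq> V1" using SV by auto
    have "finite {u \<in> ?P. E1 u a}" using finite_subset[OF _ f1, of "{u \<in> ?P. E1 u a}"] PV by auto
    hence "card {a'\<in>Sb. E1 a' a} \<le> nbr_count E1 ?P a" unfolding nbr_count_def Sb_def
      by (intro card_mono) (auto simp: rev_image_eqI)
    hence L: "nbr_count (cart_edge E1 E2) S (a,b) \<le> d + nbr_count E1 ?P a" using L1 by linarith
    have sub2: "?f ` {a'\<in>V1 - Sb. E1 a' a} \<subseteq> {u \<in> V1 \<times> V2 - S. cart_edge E1 E2 u (a,b)}"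
      using bV unfolding cart_edge_def Sb_def by auto
    have "card (?f ` {a'\<in>V1 - Sb. E1 a' a}) \<le> nbr_count (cart_edge E1 E2) (V1 \<times> V2 - S) (a,b)"
      unfolding nbr_count_def using f1 f2 by (intro card_mono[OF _ sub2]) auto
    moreover have "card (?f ` {a'\<in>V1 - Sb. E1 a' a}) = card {a'\<in>V1 - Sb. E1 a' a}"
      by (rule card_image) (auto simp: inj_on_def)
    moreover have "nbr_count E1 (V1 - ?P) a \<le> card {a'\<in>V1 - Sb. E1 a' a}"
      unfolding nbr_count_def Sb_def using f1
      by (intro card_mono) (auto simp: rev_image_eqI)
    ultimately show ?thesis using L h by linarith
  qed
  moreover have "?P \<noteq> {}" "?P \<subseteq> V1" using SV by auto
  ultimately show ?thesis unfolding defensive_alliance_def by auto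
qed

theorem proposition2:
  fixes V1 :: "'a set" and E1 :: "'a \<Rightarrow> 'a \<Rightarrow> bool"
    and V2 :: "'b set" and E2 :: "'b \<Rightarrow> 'b \<Rightarrow> bool"
    and \<delta>2 :: nat and S1 :: "'a set" and k :: int
  assumes "graph V1 E1" and "graph V2 E2"
    and "regular V2 E2 \<delta>2"
    and "S1 \<subseteq> V1"
    and "int \<delta>2 - int (max_degree V1 E1) \<le> k"
    and "k \<le> int (max_degree V1 E1) + int \<delta>2"
  shows "daf_set (V1 \<times> V2) (cart_edge E1 E2) k (S1 \<times> V2) \<longleftrightarrow>
         daf_set V1 E1 (k - int \<delta>2) S1"
proof
  assume L: "daf_set (V1 \<times> V2) (cart_edge E1 E2) k (S1 \<times> V2)"
  show "daf_set V1 E1 (k - int \<delta>2) S1"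
    unfolding daf_set_def
  proof (intro conjI allI impI)
    show "S1 \<subseteq> V1" by fact
    fix A assume A: "defensive_alliance V1 E1 (k - int \<delta>2) A"
    show "\<not> A \<subseteq> S1"
    proof
      assume "A \<subseteq> S1"
      hence "A \<times> V2 \<subseteq> S1 \<times> V2" by auto
      thus False using L dir1[OF assms(1-3) A] unfolding daf_set_def by blast
    qed
  qed
next
  assume R: "daf_set V1 E1 (k - int \<delta>2) S1"
  show "daf_set (V1 \<times> V2) (cart_edge E1 E2) k (S1 \<times> V2)"
    unfolding daf_set_def
  proof (intro conjI allI impI)
    show "S1 \<times> V2 \<subseteq> V1 \<times> V2" using assms(4) by auto
    fix S assume S: "defensive_alliance (V1 \<times> V2) (cart_edge E1 E2) k S"
    show "\<not> S \<subseteq> S1 \<times> V2"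
    proof
      assume "S \<subseteq> S1 \<times> V2"
      hence "fst ` S \<subseteq> S1" by auto
      thus False using R dir2[OF assms(1-3) S] unfolding daf_set_def by blast
    qed
  qed
qed

end
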